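(* Let $p$ be a propositional variable. The formula $\neg\Box\bot\to(\neg\neg\Box p\to\Box\neg\neg p)$ is derivable in $\mathsf{CK}\oplus\mathsf{N}_{\Diamond\Box}\oplus\mathsf{I}_{\Diamond\Box}$ but not in $\mathsf{CK}$.
   Context: Formulas: $\mathbf{L}$ is generated from a countably infinite set of propositional variables by $\varphi ::= p \mid \bot \mid \varphi\wedge\varphi \mid \varphi\vee\varphi \mid \varphi\to\varphi \mid \Box\varphi \mid \Diamond\varphi$; $\neg\varphi:=\varphi\to\bot$. Axioms: $\mathsf{K}_\Box$: $\Box(\varphi\to\psi)\to(\Box\varphi\to\Box\psi)$; $\mathsf{K}_\Diamond$: $\Box(\varphi\to\psi)\to(\Diamond\varphi\to\Diamond\psi)$; $\mathsf{N}_{\Diamond\Box}$: $\Diamond\bot\to\Box\bot$; $\mathsf{I}_{\Diamond\Box}$: $(\Diamond\varphi\to\Box\psi)\to\Box(\varphi\to\psi)$. For a set $\mathsf{Ax}$ of axioms, $\mathsf{CK}\oplus\mathsf{Ax}$ is the relation $\Gamma\vdash_{\mathsf{Ax}}\varphi$ inductively generated by: (Ax) $\Gamma\vdash\varphi$ whenever $\varphi$ is a substitution instance of an axiom of a standard Hilbert axiomatisation of intuitionistic propositional logic, of $\mathsf{K}_\Box$, of $\mathsf{K}_\Diamond$, or of an element of $\mathsf{Ax}$; (El) $\Gamma\vdash\varphi$ if $\varphi\in\Gamma$; (MP) from $\Gamma\vdash\varphi$ and $\Gamma\vdash\varphi\to\psi$ infer $\Gamma\vdash\psi$; (Nec) from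 $\emptyset\vdash\varphi$ infer $\Gamma\vdash\Box\varphi$. $\mathsf{CK}$ is the case $\mathsf{Ax}=\emptyset$. A formula is derivable in a logic if $\emptyset\vdash_{\mathsf{Ax}}\varphi$. *)

theory Defs
  imports Main
begin

datatype fm =
    Var nat
  | Bot
  | Conj fm fm
  | Disj fm fm
  | Imp fm fm
  | Box fm
  | Dia fm

definition Neg :: "fm \<Rightarrow> fm" where
  "Neg \<phi> = Imp \<phi> Bot"

fun subst :: "(nat \<Rightarrow> fm) \<Rightarrow> fm \<Rightarrow> fm" where
  "subst \<sigma> (Var n) = \<sigma> n"
| "subst \<sigma> Bot = Bot"
| "subst \<sigma> (Conj a b) = Conj (subst \<sigma> a) (subst \<sigma> b)"
| "subst \<sigma> (Disj a b) = Disj (subst \<sigma> a) (subst \<sigma> b)"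
| "subst \<sigma> (Imp a b) = Imp (subst \<sigma> a) (subst \<sigma> b)"
| "subst \<sigma> (Box a) = Box (subst \<sigma> a)"
| "subst \<sigma> (Dia a) = Dia (subst \<sigma> a)"

inductive IPC_ax :: "fm \<Rightarrow> bool" where
  ax1: "IPC_ax (Imp a (Imp b a))"
| ax2: "IPC_ax (Imp (Imp a (Imp b c)) (Imp (Imp a b) (Imp a c)))"
| ax3: "IPC_ax (Imp (Conj a b) a)"
| ax4: "IPC_ax (Imp (Conj a b) b)"
| ax5: "IPC_ax (Imp a (Imp b (Conj a b)))"
| ax6: "IPC_ax (Imp a (Disj a b))"
| ax7: "IPC_ax (Imp b (Disj a b))"
| ax8: "IPC_ax (Imp (Imp a c) (Imp (Imp b c) (Imp (Disj a b) c)))"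
| ax9: "IPC_ax (Imp Bot a)"

definition K_Box :: "fm \<Rightarrow> fm \<Rightarrow> fm" where
  "K_Box \<phi> \<psi> = Imp (Box (Imp \<phi> \<psi>)) (Imp (Box \<phi>) (Box \<psi>))"

definition K_Dia :: "fm \<Rightarrow> fm \<Rightarrow> fm" where
  "K_Dia \<phi> \<psi> = Imp (Box (Imp \<phi> \<psi>)) (Imp (Dia \<phi>) (Dia \<psi>))"

text \<open>Extra axioms are given as formulas (schemata in the propositional variables);
  their substitution instances are axioms.\<close>
definition N_DiaBox :: fm where
  "N_DiaBox = Imp (Dia Bot) (Box Bot)"

definition I_DiaBox :: fm where
  "I_DiaBox = Imp (Imp (Dia (Var 0)) (Box (Var 1))) (Box (Imp (Var 0) (Var 1)))"

inductive derives :: "fm set \<Rightarrow> fm set \<Rightarrow> fm \<Rightarrow> bool" for Ax :: "fm set" where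
  Ax_IPC: "IPC_ax \<phi> \<Longrightarrow> derives Ax \<Gamma> \<phi>"
| Ax_KBox: "derives Ax \<Gamma> (K_Box \<phi> \<psi>)"
| Ax_KDia: "derives Ax \<Gamma> (K_Dia \<phi> \<psi>)"
| Ax_extra: "\<chi> \<in> Ax \<Longrightarrow> derives Ax \<Gamma> (subst \<sigma> \<chi>)"
| El: "\<phi> \<in> \<Gamma> \<Longrightarrow> derives Ax \<Gamma> \<phi>"
| MP: "derives Ax \<Gamma> \<phi> \<Longrightarrow> derives Ax \<Gamma> (Imp \<phi> \<psi>) \<Longrightarrow> derives Ax \<Gamma> \<psi>"
| Nec: "derives Ax {} \<phi> \<Longrightarrow> derives Ax \<Gamma> (Box \<phi>)"

definition derivable :: "fm set \<Rightarrow> fm \<Rightarrow> bool" where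
  "derivable Ax \<phi> \<longleftrightarrow> derives Ax {} \<phi>"

end

theory Submission
  imports Defs
begin

lemma derives_mono:
  "derives Ax \<Gamma> \<phi> \<Longrightarrow> \<Gamma> \<subseteq> \<Delta> \<Longrightarrow> derives Ax \<Delta> \<phi>"
proof (induction arbitrary: \<Delta> rule: derives.induct)
  case (MP \<Gamma> \<phi> \<psi>) then show ?case by (meson derives.MP)
qed (auto intro: derives.intros)

lemma ax1': "derives Ax \<Gamma> (Imp a (Imp b a))" by (rule Ax_IPC) (rule ax1)
lemma ax2': "derives Ax \<Gamma> (Imp (Imp a (Imp b c)) (Imp (Imp a b) (Imp a c)))" by (rule Ax_IPC) (rule ax2)

lemma imp_refl: "derives Ax \<Gamma> (Imp a a)"
proof -
  have "derives Ax \<Gamma> (Imp (Imp a (Imp (Imp a a) a)) (Imp (Imp a (Imp a a)) (Imp a a)))" by (rule ax2')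
  then have "derives Ax \<Gamma> (Imp (Imp a (Imp a a)) (Imp a a))" using ax1' derives.MP by blast
  then show ?thesis using ax1' derives.MP by blast
qed

lemma deduction:
  "derives Ax \<Gamma>' B \<Longrightarrow> \<Gamma>' = insert A \<Gamma> \<Longrightarrow> derives Ax \<Gamma> (Imp A B)"
proof (induction arbitrary: \<Gamma> rule: derives.induct)
  case (Ax_IPC \<phi> \<Gamma>')
  then show ?case by (intro derives.MP[OF _ ax1'] derives.Ax_IPC)
next
  case (Ax_KBox \<Gamma>' \<phi> \<psi>)
  show ?case by (rule derives.MP[OF derives.Ax_KBox ax1'])
next
  case (Ax_KDia \<Gamma>' \<phi> \<psi>)
  show ?case by (rule derives.MP[OF derives.Ax_KDia ax1'])
next
  case (Ax_extra \<chi> \<Gamma>' \<sigma>)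
  then show ?case by (intro derives.MP[OF _ ax1'] derives.Ax_extra)
next
  case (El \<phi> \<Gamma>')
  show ?case
  proof (cases "\<phi> = A")
    case True then show ?thesis using imp_refl by simp
  next
    case False then have "\<phi> \<in> \<Gamma>" using El by simp
    then show ?thesis by (rule derives.MP[OF derives.El ax1'])
  qed
next
  case (MP \<Gamma>' \<phi> \<psi>)
  have 1: "derives Ax \<Gamma> (Imp A \<phi>)" using MP.IH(1) MP.prems by simp
  have 2: "derives Ax \<Gamma> (Imp A (Imp \<phi> \<psi>))" using MP.IH(2) MP.prems by simp
  show ?case by (rule derives.MP[OF 1 derives.MP[OF 2 ax2']])
next
  case (Nec \<phi> \<Gamma>')
  then show ?case by (intro derives.MP[OF _ ax1'] derives.Nec)
qed

lemma ded: "derives Ax (insert A \<Gamma>) B \<Longrightarrow> derives Ax \<Gamma> (Imp A B)"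
  using deduction by blast

lemma box_mp: "derives Ax \<Gamma> (Box (Imp a b)) \<Longrightarrow> derives Ax \<Gamma> (Box a) \<Longrightarrow> derives Ax \<Gamma> (Box b)"
  using derives.Ax_KBox[of Ax \<Gamma> a b] derives.MP unfolding K_Box_def by blast

lemma dia_mp: "derives Ax \<Gamma> (Box (Imp a b)) \<Longrightarrow> derives Ax \<Gamma> (Dia a) \<Longrightarrow> derives Ax \<Gamma> (Dia b)"
  using derives.Ax_KDia[of Ax \<Gamma> a b] derives.MP unfolding K_Dia_def by blast

lemma part1:
  "derivable {N_DiaBox, I_DiaBox}
     (Imp (Neg (Box Bot)) (Imp (Neg (Neg (Box (Var p)))) (Box (Neg (Neg (Var p))))))"
proof -
  let ?Ax = "{N_DiaBox, I_DiaBox}"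
  let ?np = "Imp (Var p) Bot"
  let ?G = "{Imp (Imp (Box (Var p)) Bot) Bot, Imp (Box Bot) Bot}"
  let ?G1 = "insert (Dia ?np) ?G"
  let ?G2 = "insert (Box (Var p)) ?G1"
  have t0: "derives ?Ax {} (Imp (Var p) (Imp ?np Bot))"
    apply (rule ded, rule ded)
    apply (rule derives.MP[of _ _ "Var p"])
     apply (rule derives.El, simp)
    apply (rule derives.El, simp)
    done
  have b1: "derives ?Ax ?G2 (Box (Imp ?np Bot))"
    apply (rule box_mp[OF derives.Nec[OF t0]])
    apply (rule derives.El, simp)
    done
  have d1: "derives ?Ax ?G2 (Dia Bot)"
    by (rule dia_mp[OF b1], rule derives.El, simp)
  have nI: "derives ?Ax ?G2 N_DiaBox"
    using derives.Ax_extra[of N_DiaBox ?Ax ?G2 Var] by (simp add: N_DiaBox_def)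
  have bb: "derives ?Ax ?G2 (Box Bot)"
    using derives.MP[OF d1] nI by (simp add: N_DiaBox_def)
  have f2: "derives ?Ax ?G2 Bot"
    by (rule derives.MP[OF bb], rule derives.El, simp)
  have f1: "derives ?Ax ?G1 Bot"
    apply (rule derives.MP[OF ded[OF f2]])
    apply (rule derives.El, simp)
    done
  have bb1: "derives ?Ax ?G1 (Box Bot)"
    by (rule derives.MP[OF f1], rule Ax_IPC, rule ax9)
  have h: "derives ?Ax ?G (Imp (Dia ?np) (Box Bot))" by (rule ded[OF bb1])
  have iI: "derives ?Ax ?G (Imp (Imp (Dia ?np) (Box Bot)) (Box (Imp ?np Bot)))"
    using derives.Ax_extra[of I_DiaBox ?Ax ?G "\<lambda>n. if n = 0 then ?np else Bot"]
    by (simp add: I_DiaBox_def)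
  have "derives ?Ax ?G (Box (Imp ?np Bot))" by (rule derives.MP[OF h iI])
  then have "derives ?Ax {} (Imp (Imp (Box Bot) Bot) (Imp (Imp (Imp (Box (Var p)) Bot) Bot) (Box (Imp ?np Bot))))"
    by (intro ded) (simp add: insert_commute)
  then show ?thesis by (simp add: derivable_def Neg_def)
qed

definition le :: "nat \<Rightarrow> nat \<Rightarrow> bool" where
  "le x y \<longleftrightarrow> y = x \<or> (x = 0 \<and> y = 1)"

definition R :: "nat \<Rightarrow> nat \<Rightarrow> bool" where
  "R x y \<longleftrightarrow> (x = 0 \<and> y = 2) \<or> (x = 1 \<and> y = 3)"

fun sat :: "nat \<Rightarrow> fm \<Rightarrow> bool" where
  "sat x (Var n) = (x = 3)"
| "sat x Bot = False"
| "sat x (Conj a b) = (sat x a \<and> sat x b)"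
| "sat x (Disj a b) = (sat x a \<or> sat x b)"
| "sat x (Imp a b) = (\<forall>y. le x y \<longrightarrow> sat y a \<longrightarrow> sat y b)"
| "sat x (Box a) = (\<forall>y z. le x y \<longrightarrow> R y z \<longrightarrow> sat z a)"
| "sat x (Dia a) = False"

lemma le_trans: "le x y \<Longrightarrow> le y z \<Longrightarrow> le x z"
  unfolding le_def by auto

lemma le_refl: "le x x" unfolding le_def by auto

lemma persist: "sat x \<phi> \<Longrightarrow> le x y \<Longrightarrow> sat y \<phi>"
proof (induction \<phi> arbitrary: x y)
  case (Var n) then show ?case by (auto simp: le_def)
next
  case (Imp a b)
  show ?case unfolding sat.simps
  proof (intro allI impI)
    fix z assume "le y z" "sat z a"
    then show "sat z b" using Imp.prems le_trans[OF Imp.prems(2) \<open>le y z\<close>] by simp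
  qed
next
  case (Box a)
  show ?case unfolding sat.simps
  proof (intro allI impI)
    fix z w assume "le y z" "R z w"
    then show "sat w a" using Box.prems le_trans[OF Box.prems(2) \<open>le y z\<close>] by simp
  qed
qed auto

lemma ipc_sound: "IPC_ax \<phi> \<Longrightarrow> sat x \<phi>"
proof (induction rule: IPC_ax.induct)
  case (ax1 a b) then show ?case using persist by (simp (no_asm)) (meson le_trans persist)
next
  case (ax2 a b c)
  show ?case unfolding sat.simps
  proof (intro allI impI)
    fix y1 y2 y3
    assume h1: "le x y1" "\<forall>y. le y1 y \<longrightarrow> sat y a \<longrightarrow> (\<forall>ya. le y ya \<longrightarrow> sat ya b \<longrightarrow> sat ya c)"
      and h2: "le y1 y2" "\<forall>y. le y2 y \<longrightarrow> sat y a \<longrightarrow> sat y b"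
      and h3: "le y2 y3" "sat y3 a"
    have "le y1 y3" using h2(1) h3(1) le_trans by blast
    moreover have "sat y3 b" using h2(2) h3 le_refl by blast
    ultimately show "sat y3 c" using h1(2) h3(2) le_refl by blast
  qed
next
  case (ax5 a b) then show ?case by (simp (no_asm)) (meson le_trans persist)
next
  case (ax8 a c b)
  show ?case unfolding sat.simps
  proof (intro allI impI)
    fix y1 y2 y3
    assume h1: "le x y1" "\<forall>y. le y1 y \<longrightarrow> sat y a \<longrightarrow> sat y c"
      and h2: "le y1 y2" "\<forall>y. le y2 y \<longrightarrow> sat y b \<longrightarrow> sat y c"
      and h3: "le y2 y3" "sat y3 a \<or> sat y3 b"
    have "le y1 y3" using h2(1) h3(1) le_trans by blast
    then show "sat y3 c" using h1(2) h2(2) h3 by blast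
  qed
qed auto

lemma sound: "derives {} \<Gamma> \<phi> \<Longrightarrow> (\<forall>\<psi>\<in>\<Gamma>. sat x \<psi>) \<Longrightarrow> sat x \<phi>"
proof (induction arbitrary: x rule: derives.induct)
  case (Ax_IPC \<phi> \<Gamma>) then show ?case by (simp add: ipc_sound)
next
  case (Ax_KBox \<Gamma> a b)
  show ?case unfolding K_Box_def sat.simps
  proof (intro allI impI)
    fix y1 y2 y3 z
    assume h1: "le x y1" "\<forall>y z. le y1 y \<longrightarrow> R y z \<longrightarrow> (\<forall>ya. le z ya \<longrightarrow> sat ya a \<longrightarrow> sat ya b)"
      and h2: "le y1 y2" "\<forall>y z. le y2 y \<longrightarrow> R y z \<longrightarrow> sat z a"
      and h3: "le y2 y3" "R y3 z"
    have "le y1 y3" using h2(1) h3(1) le_trans by blast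
    then show "sat z b" using h1(2) h2(2) h3 le_refl by blast
  qed
next
  case (Ax_KDia \<Gamma> a b) then show ?case unfolding K_Dia_def by simp
next
  case (MP \<Gamma> a b) then show ?case using le_refl by force
next
  case (Nec a \<Gamma>) then show ?case by simp
qed auto

lemma sat1box: "sat 1 (Box (Var p))"
  by (simp add: le_def R_def)

lemma satA: "sat 0 (Neg (Box Bot))"
  unfolding Neg_def sat.simps
proof (intro allI impI)
  fix y assume "le 0 y" "\<forall>y' z. le y y' \<longrightarrow> R y' z \<longrightarrow> False"
  then have "le y y" "R y (if y = 0 then 2 else 3)" "\<forall>y' z. le y y' \<longrightarrow> R y' z \<longrightarrow> False"
    by (auto simp: le_def R_def)
  then show False by blast
qed

lemma satB: "sat 0 (Neg (Neg (Box (Var p))))"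
  unfolding Neg_def sat.simps(5) sat.simps(2)
proof (intro allI impI)
  fix y assume "le 0 y" and h: "\<forall>y'. le y y' \<longrightarrow> sat y' (Box (Var p)) \<longrightarrow> False"
  then have "le y 1" by (auto simp: le_def)
  then show False using h sat1box[of p] by blast
qed

lemma satC: "\<not> sat 0 (Box (Neg (Neg (Var p))))"
proof
  assume "sat 0 (Box (Neg (Neg (Var p))))"
  then have "sat 2 (Neg (Neg (Var p)))" using le_refl[of 0] unfolding sat.simps R_def by blast
  moreover have "sat 2 (Neg (Var p))" by (simp add: Neg_def le_def)
  ultimately show False using le_refl[of 2] unfolding Neg_def sat.simps by blast
qed

lemma part2:
  "\<not> derivable {} (Imp (Neg (Box Bot)) (Imp (Neg (Neg (Box (Var p)))) (Box (Neg (Neg (Var p))))))"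
proof
  assume "derivable {} (Imp (Neg (Box Bot)) (Imp (Neg (Neg (Box (Var p)))) (Box (Neg (Neg (Var p))))))"
  then have "sat 0 (Imp (Neg (Box Bot)) (Imp (Neg (Neg (Box (Var p)))) (Box (Neg (Neg (Var p))))))"
    unfolding derivable_def using sound by blast
  then have "sat 0 (Imp (Neg (Neg (Box (Var p)))) (Box (Neg (Neg (Var p)))))"
    using satA le_refl[of 0] unfolding sat.simps(5)[of 0 "Neg (Box Bot)"] by blast
  then show False using satB[of p] satC[of p] le_refl[of 0] unfolding sat.simps(5)[of 0 "Neg (Neg (Box (Var p)))"] by blast
qed

theorem mainTheorem17:
  fixes p :: nat
  defines "\<phi> \<equiv> Imp (Neg (Box Bot)) (Imp (Neg (Neg (Box (Var p)))) (Box (Neg (Neg (Var p)))))"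
  shows "derivable {N_DiaBox, I_DiaBox} \<phi> \<and> \<not> derivable {} \<phi>"
  unfolding \<phi>_def using part1 part2 by blast

end
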